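(* Let $n\ge2$ and $\delta>0$, and let $\mathtt S_{n,\delta}:=\{(\mathbf a,\mathbf b)\in\mathtt S_n: a_0>\delta\}$. Then the inverse NLFT is Lipschitz continuous on $\mathtt S_{n,\delta}$ (Euclidean metrics), with a Lipschitz constant depending only on $n$ and $\delta$.
   Context: For $(\mathbf a,\mathbf b)\in\mathbb C^n\times\mathbb C^n$ let $a(z)=\sum_{k=0}^{n-1}a_kz^{-k}$, $b(z)=\sum_{k=0}^{n-1}b_kz^k$, and $a^*(z):=\overline{a(1/\overline z)}$ (similarly $b^*$). $\mathtt S_n$ is the set of $(\mathbf a,\mathbf b)$ with $a_0$ real and positive and $aa^*+bb^*=1$. The NLFT of $\boldsymbol\gamma$ supported in $\{0,\dots,n-1\}$ is $\prod_{k=0}^{n-1}\frac{1}{\sqrt{1+|\gamma_k|^2}}\begin{pmatrix}1&\gamma_kz^k\\-\overline{\gamma_k}z^{-k}&1\end{pmatrix}=\begin{pmatrix}a&b\\-b^*&a^*\end{pmatrix}$ (ordered by increasing $k$); it is a bijection from such sequences onto $\mathtt S_n$ and its inverse is the inverse NLFT. *)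

theory Defs
  imports "HOL-Analysis.Analysis"
begin

text \<open>Coefficient sequences are functions nat \<Rightarrow> complex; only indices < n matter.
  a(z) = sum_{k<n} a_k z^(-k),  b(z) = sum_{k<n} b_k z^k.\<close>

definition lpoly_a :: "nat \<Rightarrow> (nat \<Rightarrow> complex) \<Rightarrow> complex \<Rightarrow> complex" where
  "lpoly_a n a z = (\<Sum>k<n. a k * inverse z ^ k)"

definition lpoly_b :: "nat \<Rightarrow> (nat \<Rightarrow> complex) \<Rightarrow> complex \<Rightarrow> complex" where
  "lpoly_b n b z = (\<Sum>k<n. b k * z ^ k)"

definition star :: "(complex \<Rightarrow> complex) \<Rightarrow> complex \<Rightarrow> complex" where
  "star f z = cnj (f (inverse (cnj z)))"

text \<open>The set S_n of pairs (a,b) with a_0 real positive and a a^* + b b^* = 1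
  (as Laurent polynomials, i.e. for all z \<noteq> 0).\<close>
definition S_set :: "nat \<Rightarrow> ((nat \<Rightarrow> complex) \<times> (nat \<Rightarrow> complex)) set" where
  "S_set n = {(a, b). (\<forall>k\<ge>n. a k = 0) \<and> (\<forall>k\<ge>n. b k = 0) \<and>
      Im (a 0) = 0 \<and> Re (a 0) > 0 \<and>
      (\<forall>z. z \<noteq> 0 \<longrightarrow>
         lpoly_a n a z * star (lpoly_a n a) z + lpoly_b n b z * star (lpoly_b n b) z = 1)}"

definition S_delta :: "nat \<Rightarrow> real \<Rightarrow> ((nat \<Rightarrow> complex) \<times> (nat \<Rightarrow> complex)) set" where
  "S_delta n \<delta> = {(a, b) \<in> S_set n. Re (a 0) > \<delta>}"

definition mat2 :: "complex \<Rightarrow> complex \<Rightarrow> complex \<Rightarrow> complex \<Rightarrow> complex^2^2" where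
  "mat2 p q r s = vector [vector [p, q], vector [r, s]]"

definition nlft_factor :: "complex \<Rightarrow> nat \<Rightarrow> complex \<Rightarrow> complex^2^2" where
  "nlft_factor g k z = (1 / sqrt (1 + (cmod g)\<^sup>2)) *\<^sub>R
     (mat2 1 (g * z ^ k) (- cnj g * inverse z ^ k) 1)"

definition nlft_mat :: "nat \<Rightarrow> (nat \<Rightarrow> complex) \<Rightarrow> complex \<Rightarrow> complex^2^2" where
  "nlft_mat n \<gamma> z = foldl (\<lambda>M k. M ** nlft_factor (\<gamma> k) k z) (mat 1) [0..<n]"

definition has_nlft :: "nat \<Rightarrow> (nat \<Rightarrow> complex) \<Rightarrow> (nat \<Rightarrow> complex) \<times> (nat \<Rightarrow> complex) \<Rightarrow> bool" where
  "has_nlft n \<gamma> ab \<longleftrightarrow> (\<forall>k\<ge>n. \<gamma> k = 0) \<and>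
     (\<forall>z. z \<noteq> 0 \<longrightarrow> nlft_mat n \<gamma> z =
        mat2 (lpoly_a n (fst ab) z) (lpoly_b n (snd ab) z)
             (- star (lpoly_b n (snd ab)) z) (star (lpoly_a n (fst ab)) z))"

definition inv_nlft :: "nat \<Rightarrow> (nat \<Rightarrow> complex) \<times> (nat \<Rightarrow> complex) \<Rightarrow> nat \<Rightarrow> complex" where
  "inv_nlft n ab = (THE \<gamma>. has_nlft n \<gamma> ab)"

definition dist_seq :: "nat \<Rightarrow> (nat \<Rightarrow> complex) \<Rightarrow> (nat \<Rightarrow> complex) \<Rightarrow> real" where
  "dist_seq n x y = sqrt (\<Sum>k<n. (cmod (x k - y k))\<^sup>2)"

definition dist_pair :: "nat \<Rightarrow> (nat \<Rightarrow> complex) \<times> (nat \<Rightarrow> complex) \<Rightarrow>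
    (nat \<Rightarrow> complex) \<times> (nat \<Rightarrow> complex) \<Rightarrow> real" where
  "dist_pair n p q = sqrt (\<Sum>k<n. (cmod (fst p k - fst q k))\<^sup>2 + (cmod (snd p k - snd q k))\<^sup>2)"

end

theory Submission
  imports Defs
begin



lemma mat2_nth: "mat2 p q r s $ 1 $ 1 = p" "mat2 p q r s $ 1 $ 2 = q" "mat2 p q r s $ 2 $ 1 = r" "mat2 p q r s $ 2 $ 2 = s"
  by (simp_all add: mat2_def)

lemma mat2_eq_iff: "(M::complex^2^2) = mat2 p q r s \<longleftrightarrow> M$1$1 = p \<and> M$1$2 = q \<and> M$2$1 = r \<and> M$2$2 = s"
  by (auto simp: vec_eq_iff forall_2 mat2_nth)

lemma mat2_mult: "mat2 p q r s ** mat2 e f g h = mat2 (p*e+q*g) (p*f+q*h) (r*e+s*g) (r*f+s*h)"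
  by (simp add: mat2_eq_iff matrix_matrix_mult_def sum_2 mat2_nth)

lemma mat2_one: "mat 1 = mat2 1 0 0 1"
  by (simp add: mat2_eq_iff mat_def)

lemma mat2_scaleR: "c *\<^sub>R mat2 p q r s = mat2 (of_real c * p) (of_real c * q) (of_real c * r) (of_real c * s)"
  by (simp add: mat2_eq_iff mat2_nth) (simp add: scaleR_conv_of_real)

definition Tm :: "complex \<Rightarrow> complex^2^2" where "Tm z = mat2 z 0 0 1"
definition Ti :: "complex \<Rightarrow> complex^2^2" where "Ti z = mat2 (inverse z) 0 0 1"

lemma Ti_Tm: "z \<noteq> 0 \<Longrightarrow> Ti z ** Tm z = mat 1"
  by (simp add: Ti_def Tm_def mat2_mult mat2_one)
lemma Tm_Ti: "z \<noteq> 0 \<Longrightarrow> Tm z ** Ti z = mat 1"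
  by (simp add: Ti_def Tm_def mat2_mult mat2_one)

lemma factor_shift: "z \<noteq> 0 \<Longrightarrow> nlft_factor g (Suc k) z = Tm z ** nlft_factor g k z ** Ti z"
  by (simp add: nlft_factor_def Ti_def Tm_def mat2_mult mat2_scaleR field_simps)

lemma foldl_mult:
  fixes f :: "nat \<Rightarrow> complex^2^2" and M0 P Q :: "complex^2^2"
  shows "foldl (\<lambda>M k. M ** f k) M0 xs = M0 ** foldl (\<lambda>M k. M ** f k) (mat 1) xs"
proof (induction xs arbitrary: M0)
  case Nil then show ?case by (simp add: matrix_mul_rid)
next
  case (Cons x xs)
  show ?case using Cons[of "M0 ** f x"] Cons[of "mat 1 ** f x"]
    by (simp add: matrix_mul_assoc matrix_mul_lid)
qed

lemma foldl_conj:
  fixes f :: "nat \<Rightarrow> complex^2^2" and M0 P Q :: "complex^2^2"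
  assumes QP: "Q ** P = mat 1"
  shows "foldl (\<lambda>M k. M ** (P ** f k ** Q)) (P ** M0 ** Q) xs = P ** foldl (\<lambda>M k. M ** f k) M0 xs ** Q"
proof (induction xs arbitrary: M0)
  case Nil then show ?case by simp
next
  case (Cons x xs)
  have "(P ** M0 ** Q) ** (P ** f x ** Q) = P ** (M0 ** f x) ** Q"
    by (metis matrix_mul_assoc matrix_mul_rid QP)
  then show ?case using Cons[of "M0 ** f x"] by simp
qed

lemma nlft_mat_Suc:
  assumes z: "z \<noteq> 0"
  shows "nlft_mat (Suc m) \<gamma> z = nlft_factor (\<gamma> 0) 0 z ** (Tm z ** nlft_mat m (\<lambda>k. \<gamma> (Suc k)) z ** Ti z)"
proof -
  have l: "[0..<Suc m] = 0 # map Suc [0..<m]"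
    by (simp add: map_Suc_upt upt_conv_Cons)
  have "nlft_mat (Suc m) \<gamma> z = foldl (\<lambda>M k. M ** (Tm z ** nlft_factor (\<gamma> (Suc k)) k z ** Ti z)) (mat 1 ** nlft_factor (\<gamma> 0) 0 z) [0..<m]"
    unfolding nlft_mat_def l by (simp add: foldl_map factor_shift[OF z])
  also have "\<dots> = nlft_factor (\<gamma> 0) 0 z ** foldl (\<lambda>M k. M ** (Tm z ** nlft_factor (\<gamma> (Suc k)) k z ** Ti z)) (Tm z ** mat 1 ** Ti z) [0..<m]"
    by (subst foldl_mult) (simp add: matrix_mul_lid matrix_mul_rid Tm_Ti[OF z])
  also have "\<dots> = nlft_factor (\<gamma> 0) 0 z ** (Tm z ** nlft_mat m (\<lambda>k. \<gamma> (Suc k)) z ** Ti z)"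
    unfolding nlft_mat_def by (subst foldl_conj[OF Ti_Tm[OF z]]) simp
  finally show ?thesis .
qed

definition sg :: "complex \<Rightarrow> complex" where
  "sg g = complex_of_real (1 / sqrt (1 + (cmod g)^2))"

definition prv :: "(nat \<Rightarrow> complex) \<Rightarrow> nat \<Rightarrow> complex" where
  "prv \<beta> k = (case k of 0 \<Rightarrow> 0 | Suc j \<Rightarrow> \<beta> j)"

lemma prv_simps[simp]: "prv \<beta> 0 = 0" "prv \<beta> (Suc j) = \<beta> j"
  by (simp_all add: prv_def)

definition up :: "complex \<Rightarrow> (nat \<Rightarrow> complex) \<times> (nat \<Rightarrow> complex) \<Rightarrow> (nat \<Rightarrow> complex) \<times> (nat \<Rightarrow> complex)" where
  "up g ab = ((\<lambda>k. sg g * (fst ab k - g * cnj (prv (snd ab) k))),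
              (\<lambda>k. sg g * (prv (snd ab) k + g * cnj (fst ab k))))"

definition MM :: "nat \<Rightarrow> (nat \<Rightarrow> complex) \<times> (nat \<Rightarrow> complex) \<Rightarrow> complex \<Rightarrow> complex^2^2" where
  "MM N ab z = mat2 (lpoly_a N (fst ab) z) (lpoly_b N (snd ab) z)
      (- star (lpoly_b N (snd ab)) z) (star (lpoly_a N (fst ab)) z)"

lemma star_a: "star (lpoly_a N a) z = (\<Sum>k<N. cnj (a k) * z^k)"
  by (simp add: star_def lpoly_a_def)

lemma star_b: "star (lpoly_b N b) z = (\<Sum>k<N. cnj (b k) * inverse z ^ k)"
  by (simp add: star_def lpoly_b_def)

lemma cnj_sg[simp]: "cnj (sg g) = sg g"
  by (simp add: sg_def)

lemma factor0: "nlft_factor g 0 z = mat2 (sg g) (sg g * g) (- (sg g * cnj g)) (sg g)"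
  by (simp add: nlft_factor_def mat2_scaleR sg_def)

lemma sum_prv: fixes h :: "complex \<Rightarrow> complex" and x :: complex shows "h 0 = 0 \<Longrightarrow> (\<Sum>k<Suc N. h (prv \<beta> k) * x^k) = x * (\<Sum>k<N. h (\<beta> k) * x^k)"
  by (subst sum.lessThan_Suc_shift) (simp add: sum_distrib_left algebra_simps)

lemma sum_top0: "f N = 0 \<Longrightarrow> (\<Sum>k<Suc N. f k) = (\<Sum>k<N. f k)"
  by simp

lemma MM_step:
  assumes z: "z \<noteq> 0" and za: "\<forall>k\<ge>N. fst ab k = 0" and zb: "\<forall>k\<ge>N. snd ab k = 0"
  shows "nlft_factor g 0 z ** (Tm z ** MM N ab z ** Ti z) = MM (Suc N) (up g ab) z"
proof -
  obtain \<alpha> \<beta> where ab: "ab = (\<alpha>, \<beta>)" by (cases ab)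
  have a0: "\<alpha> N = 0" "\<beta> N = 0" using za zb ab by auto
  define s where "s = sg g"
  define w where "w = inverse z"
  have e1: "lpoly_a (Suc N) (fst (up g ab)) z = s * (lpoly_a N \<alpha> z - g * w * star (lpoly_b N \<beta>) z)"
  proof -
    have "lpoly_a (Suc N) (fst (up g ab)) z = s * (\<Sum>k<Suc N. \<alpha> k * w^k) - s * g * (\<Sum>k<Suc N. cnj (prv \<beta> k) * w^k)"
      unfolding lpoly_a_def up_def ab s_def w_def
      by (simp add: algebra_simps sum_subtractf sum_distrib_left)
    also have "\<dots> = s * (lpoly_a N \<alpha> z - g * w * star (lpoly_b N \<beta>) z)"
      by (subst sum_prv[where h=cnj]) (simp_all add: a0 star_b lpoly_a_def w_def algebra_simps)
    finally show ?thesis .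
  qed
  have e2: "lpoly_b (Suc N) (snd (up g ab)) z = s * (z * lpoly_b N \<beta> z + g * star (lpoly_a N \<alpha>) z)"
  proof -
    have "lpoly_b (Suc N) (snd (up g ab)) z = s * (\<Sum>k<Suc N. prv \<beta> k * z^k) + s * g * (\<Sum>k<Suc N. cnj (\<alpha> k) * z^k)"
      unfolding lpoly_b_def up_def ab s_def
      by (simp add: algebra_simps sum.distrib sum_distrib_left)
    also have "\<dots> = s * (z * lpoly_b N \<beta> z + g * star (lpoly_a N \<alpha>) z)"
      using sum_prv[where h="\<lambda>x. x" and \<beta>=\<beta> and N=N and x=z]
      by (simp add: a0 star_a lpoly_b_def algebra_simps)
    finally show ?thesis .
  qed
  have e3: "star (lpoly_b (Suc N) (snd (up g ab))) z = s * (w * star (lpoly_b N \<beta>) z + cnj g * lpoly_a N \<alpha> z)"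
  proof -
    have "star (lpoly_b (Suc N) (snd (up g ab))) z = s * (\<Sum>k<Suc N. cnj (prv \<beta> k) * w^k) + s * cnj g * (\<Sum>k<Suc N. \<alpha> k * w^k)"
      unfolding star_b up_def ab s_def w_def
      by (simp add: algebra_simps sum.distrib sum_distrib_left)
    also have "\<dots> = s * (w * star (lpoly_b N \<beta>) z + cnj g * lpoly_a N \<alpha> z)"
      by (subst sum_prv[where h=cnj]) (simp_all add: a0 star_b lpoly_a_def w_def algebra_simps)
    finally show ?thesis .
  qed
  have e4: "star (lpoly_a (Suc N) (fst (up g ab))) z = s * (star (lpoly_a N \<alpha>) z - cnj g * z * lpoly_b N \<beta> z)"
  proof -
    have "star (lpoly_a (Suc N) (fst (up g ab))) z = s * (\<Sum>k<Suc N. cnj (\<alpha> k) * z^k) - s * cnj g * (\<Sum>k<Suc N. prv \<beta> k * z^k)"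
      unfolding star_a up_def ab s_def
      by (simp add: algebra_simps sum_subtractf sum_distrib_left)
    also have "\<dots> = s * (star (lpoly_a N \<alpha>) z - cnj g * z * lpoly_b N \<beta> z)"
      using sum_prv[where h="\<lambda>x. x" and \<beta>=\<beta> and N=N and x=z]
      by (simp add: a0 star_a lpoly_b_def algebra_simps)
    finally show ?thesis .
  qed
  show ?thesis
    unfolding MM_def factor0 Tm_def Ti_def mat2_mult e1 e2 e3 e4
    using z by (simp add: mat2_eq_iff mat2_nth ab s_def w_def field_simps)
qed




fun fwd :: "nat \<Rightarrow> (nat \<Rightarrow> complex) \<Rightarrow> (nat \<Rightarrow> complex) \<times> (nat \<Rightarrow> complex)" where
  "fwd 0 \<gamma> = ((\<lambda>k. if k = 0 then 1 else 0), (\<lambda>k. 0))"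
| "fwd (Suc m) \<gamma> = up (\<gamma> 0) (fwd m (\<lambda>k. \<gamma> (Suc k)))"

lemma fwd_zero: "(k \<ge> max m 1 \<longrightarrow> fst (fwd m \<gamma>) k = 0) \<and> (k \<ge> m \<longrightarrow> snd (fwd m \<gamma>) k = 0)"
proof (induction m arbitrary: \<gamma> k)
  case 0 then show ?case by simp
next
  case (Suc m)
  note IH = Suc.IH
  show ?case
  proof (cases k)
    case 0 then show ?thesis by simp
  next
    case (Suc j)
    note kj = this
    have A: "Suc m \<le> k \<Longrightarrow> fst (fwd m (\<lambda>k. \<gamma> (Suc k))) k = 0"
      using IH[where \<gamma>="\<lambda>k. \<gamma> (Suc k)" and k=k] kj by auto
    have B: "Suc m \<le> k \<Longrightarrow> snd (fwd m (\<lambda>k. \<gamma> (Suc k))) j = 0"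
      using IH[where \<gamma>="\<lambda>k. \<gamma> (Suc k)" and k=j] kj by auto
    show ?thesis using A B kj by (simp add: up_def)
  qed
qed

lemma fwd_zero_a: "k \<ge> m \<Longrightarrow> m \<ge> 1 \<Longrightarrow> fst (fwd m \<gamma>) k = 0"
  using fwd_zero[where m=m and k=k and \<gamma>=\<gamma>] by auto
lemma fwd_zero_b: "k \<ge> m \<Longrightarrow> snd (fwd m \<gamma>) k = 0"
  using fwd_zero[where m=m and k=k and \<gamma>=\<gamma>] by auto

lemma fwd_mat: "z \<noteq> 0 \<Longrightarrow> nlft_mat m \<gamma> z = MM (Suc m) (fwd m \<gamma>) z"
proof (induction m arbitrary: \<gamma>)
  case 0
  then show ?case by (simp add: nlft_mat_def MM_def lpoly_a_def lpoly_b_def star_def mat2_one)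
next
  case (Suc m)
  have za: "\<forall>k\<ge>Suc m. fst (fwd m (\<lambda>k. \<gamma> (Suc k))) k = 0"
    using fwd_zero[where m=m and \<gamma>="\<lambda>k. \<gamma> (Suc k)"] by auto
  have zb: "\<forall>k\<ge>Suc m. snd (fwd m (\<lambda>k. \<gamma> (Suc k))) k = 0"
    using fwd_zero[where m=m and \<gamma>="\<lambda>k. \<gamma> (Suc k)"] by auto
  show ?case
    unfolding nlft_mat_Suc[OF Suc.prems] Suc.IH[OF Suc.prems]
    using MM_step[OF Suc.prems za zb] by simp
qed

lemma lpoly_a_trunc: "\<forall>k\<ge>N. a k = 0 \<Longrightarrow> N \<le> M \<Longrightarrow> lpoly_a M a z = lpoly_a N a z"
  unfolding lpoly_a_def by (rule sum.mono_neutral_right) auto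
lemma lpoly_b_trunc: "\<forall>k\<ge>N. b k = 0 \<Longrightarrow> N \<le> M \<Longrightarrow> lpoly_b M b z = lpoly_b N b z"
  unfolding lpoly_b_def by (rule sum.mono_neutral_right) auto

lemma MM_trunc: "\<forall>k\<ge>N. fst ab k = 0 \<Longrightarrow> \<forall>k\<ge>N. snd ab k = 0 \<Longrightarrow> N \<le> M \<Longrightarrow> MM M ab = MM N ab"
proof -
  assume a: "\<forall>k\<ge>N. fst ab k = 0" and b: "\<forall>k\<ge>N. snd ab k = 0" and NM: "N \<le> M"
  have 1: "lpoly_a M (fst ab) = lpoly_a N (fst ab)" using lpoly_a_trunc[OF a NM] by blast
  have 2: "lpoly_b M (snd ab) = lpoly_b N (snd ab)" using lpoly_b_trunc[OF b NM] by blast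
  show ?thesis unfolding MM_def 1 2 ..
qed

lemma fwd_mat': "z \<noteq> 0 \<Longrightarrow> m \<ge> 1 \<Longrightarrow> nlft_mat m \<gamma> z = MM m (fwd m \<gamma>) z"
proof -
  assume z: "z \<noteq> 0" and m: "m \<ge> 1"
  have za: "\<forall>k\<ge>m. fst (fwd m \<gamma>) k = 0" using fwd_zero_a m by blast
  have zb: "\<forall>k\<ge>m. snd (fwd m \<gamma>) k = 0" using fwd_zero_b by blast
  show ?thesis using fwd_mat[OF z, of m \<gamma>] MM_trunc[OF za zb, of "Suc m"] by simp
qed




definition gam0 :: "(nat \<Rightarrow> complex) \<times> (nat \<Rightarrow> complex) \<Rightarrow> complex" where
  "gam0 ab = snd ab 0 / fst ab 0"

definition strip :: "(nat \<Rightarrow> complex) \<times> (nat \<Rightarrow> complex) \<Rightarrow> (nat \<Rightarrow> complex) \<times> (nat \<Rightarrow> complex)" where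
  "strip ab = ((\<lambda>k. sg (gam0 ab) * (fst ab k + gam0 ab * cnj (snd ab k))),
               (\<lambda>k. sg (gam0 ab) * (snd ab (Suc k) - gam0 ab * cnj (fst ab (Suc k)))))"

fun invf :: "(nat \<Rightarrow> complex) \<times> (nat \<Rightarrow> complex) \<Rightarrow> nat \<Rightarrow> complex" where
  "invf ab 0 = gam0 ab"
| "invf ab (Suc k) = invf (strip ab) k"

definition invn :: "nat \<Rightarrow> (nat \<Rightarrow> complex) \<times> (nat \<Rightarrow> complex) \<Rightarrow> nat \<Rightarrow> complex" where
  "invn n ab k = (if k < n then invf ab k else 0)"

lemma sg_pos: "Re (sg g) > 0" "Im (sg g) = 0" "sg g \<noteq> 0"
  using add_pos_nonneg[of 1 "(cmod g)^2"] by (auto simp: sg_def complex_eq_iff)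

lemma sg_sq: "sg g * sg g * (1 + g * cnj g) = 1"
proof -
  define t where "t = (cmod g)^2"
  have t0: "t \<ge> 0" by (simp add: t_def)
  have gc: "g * cnj g = of_real t" unfolding t_def by (metis complex_norm_square of_real_power)
  have h: "sqrt (1+t) * sqrt (1+t) = 1 + t" using t0 by (simp add: real_sqrt_mult_self)
  have nz: "sqrt (1+t) \<noteq> 0" using t0 by simp
  have r: "(1 / sqrt (1 + t)) * (1 / sqrt (1 + t)) * (1 + t) = 1"
    using h nz by (simp add: divide_simps)
  have "sg g * sg g * (1 + g * cnj g) = of_real ((1 / sqrt (1 + t)) * (1 / sqrt (1 + t)) * (1 + t))"
    unfolding sg_def gc t_def[symmetric] by (simp only: of_real_mult of_real_add of_real_1)
  then show ?thesis unfolding r by simp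
qed

lemma real_cnj: "Im x = 0 \<Longrightarrow> cnj x = x"
  by (simp add: complex_eq_iff)

lemma gam0_up:
  assumes "Im (fst ab 0) = 0" "fst ab 0 \<noteq> 0"
  shows "gam0 (up g ab) = g"
  using assms sg_pos[of g] by (simp add: gam0_def up_def real_cnj)

lemma strip_up:
  assumes r: "Im (fst ab 0) = 0" and nz: "fst ab 0 \<noteq> 0"
  shows "strip (up g ab) = ab"
proof -
  have g: "gam0 (up g ab) = g" by (rule gam0_up[OF r nz])
  have 1: "fst (strip (up g ab)) k = fst ab k" for k
  proof -
    have "fst (strip (up g ab)) k = sg g * sg g * (1 + g * cnj g) * fst ab k"
      unfolding strip_def g by (simp add: up_def algebra_simps)
    then show ?thesis by (simp add: sg_sq)
  qed
  have 2: "snd (strip (up g ab)) k = snd ab k" for k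
  proof -
    have "snd (strip (up g ab)) k = sg g * sg g * (1 + g * cnj g) * snd ab k"
      unfolding strip_def g by (simp add: up_def algebra_simps)
    then show ?thesis by (simp add: sg_sq)
  qed
  show ?thesis using 1 2 by (simp add: prod_eq_iff fun_eq_iff)
qed

lemma up_strip:
  assumes r: "Im (fst ab 0) = 0" and nz: "fst ab 0 \<noteq> 0"
  shows "up (gam0 ab) (strip ab) = ab"
proof -
  define g where "g = gam0 ab"
  have b0: "snd ab 0 = g * fst ab 0" using nz by (simp add: g_def gam0_def)
  have ca: "cnj (fst ab 0) = fst ab 0" using r by (rule real_cnj)
  have 1: "fst (up g (strip ab)) k = fst ab k" for k
  proof -
    have "fst (up g (strip ab)) k = sg g * sg g * (1 + g * cnj g) * fst ab k"
    proof (cases k)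
      case 0 then show ?thesis
        unfolding up_def strip_def g_def[symmetric] by (simp add: b0 ca algebra_simps)
    next
      case (Suc j) then show ?thesis
        unfolding up_def strip_def g_def[symmetric] by (simp add: algebra_simps)
    qed
    then show ?thesis by (simp add: sg_sq)
  qed
  have 2: "snd (up g (strip ab)) k = snd ab k" for k
  proof -
    have "snd (up g (strip ab)) k = sg g * sg g * (1 + g * cnj g) * snd ab k"
    proof (cases k)
      case 0 then show ?thesis
        unfolding up_def strip_def g_def[symmetric] by (simp add: b0 ca algebra_simps)
    next
      case (Suc j) then show ?thesis
        unfolding up_def strip_def g_def[symmetric] by (simp add: algebra_simps)
    qed
    then show ?thesis by (simp add: sg_sq)
  qed
  show ?thesis using 1 2 by (simp add: prod_eq_iff fun_eq_iff g_def)
qed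

lemma fwd_a0: "Im (fst (fwd m \<gamma>) 0) = 0 \<and> Re (fst (fwd m \<gamma>) 0) = (\<Prod>k<m. 1 / sqrt (1 + (cmod (\<gamma> k))^2))"
proof (induction m arbitrary: \<gamma>)
  case 0 then show ?case by simp
next
  case (Suc m)
  show ?case unfolding prod.lessThan_Suc_shift using Suc.IH[of "\<lambda>k. \<gamma> (Suc k)"]
    by (simp add: up_def sg_def)
qed

lemma fwd_a0_pos: "Im (fst (fwd m \<gamma>) 0) = 0" "fst (fwd m \<gamma>) 0 \<noteq> 0"
proof -
  show "Im (fst (fwd m \<gamma>) 0) = 0" using fwd_a0 by blast
  have "Re (fst (fwd m \<gamma>) 0) > 0" unfolding fwd_a0[THEN conjunct2]
    by (rule prod_pos) (auto intro: add_pos_nonneg)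
  then show "fst (fwd m \<gamma>) 0 \<noteq> 0" by auto
qed

lemma invf_fwd: "k < m \<Longrightarrow> invf (fwd m \<gamma>) k = \<gamma> k"
proof (induction k arbitrary: m \<gamma>)
  case 0
  then obtain m' where m: "m = Suc m'" by (cases m) auto
  show ?case unfolding m by (simp add: gam0_up fwd_a0_pos)
next
  case (Suc k)
  then obtain m' where m: "m = Suc m'" by (cases m) auto
  have "k < m'" using Suc.prems m by simp
  then show ?case unfolding m by (simp add: strip_up fwd_a0_pos Suc.IH)
qed

lemma invf_local: "(\<forall>j\<le>k. fst p j = fst q j \<and> snd p j = snd q j) \<Longrightarrow> invf p k = invf q k"
proof (induction k arbitrary: p q)
  case 0 then show ?case by (simp add: gam0_def)
next
  case (Suc k)
  have g: "gam0 p = gam0 q" using Suc.prems by (simp add: gam0_def)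
  have "\<forall>j\<le>k. fst (strip p) j = fst (strip q) j \<and> snd (strip p) j = snd (strip q) j"
    using Suc.prems unfolding strip_def g by auto
  then show ?case by (simp add: Suc.IH)
qed

lemma fwd_cong: "(\<forall>k<m. \<gamma> k = \<gamma>' k) \<Longrightarrow> fwd m \<gamma> = fwd m \<gamma>'"
proof (induction m arbitrary: \<gamma> \<gamma>')
  case 0 then show ?case by simp
next
  case (Suc m)
  have "fwd m (\<lambda>k. \<gamma> (Suc k)) = fwd m (\<lambda>k. \<gamma>' (Suc k))" using Suc by simp
  moreover have "\<gamma> 0 = \<gamma>' 0" using Suc.prems by simp
  ultimately show ?case by simp
qed




lemma coeff_eq0:
  fixes c :: "nat \<Rightarrow> complex"
  assumes h: "\<forall>w. w \<noteq> 0 \<longrightarrow> (\<Sum>k<n. c k * w^k) = 0" and k: "k < n"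
  shows "c k = 0"
proof (rule ccontr)
  assume ck: "c k \<noteq> 0"
  obtain N where n: "n = Suc N" using k by (cases n) auto
  have ex: "\<exists>i\<le>N. c i \<noteq> 0" using ck k n less_Suc_eq_le by blast
  have fin: "finite {x. (\<Sum>i\<le>N. c i * x^i) = 0}"
    using polyfun_finite_roots[of c N] ex by blast
  have "UNIV - {0} \<subseteq> {x. (\<Sum>i\<le>N. c i * x^i) = 0}"
    using h n by (auto simp: lessThan_Suc_atMost)
  then have "finite (UNIV - {0::complex})" using fin finite_subset by blast
  then have "finite (UNIV :: complex set)" by simp
  then show False using infinite_UNIV_char_0 by blast
qed

lemma lpa_coeff:
  assumes h: "\<forall>z. z \<noteq> 0 \<longrightarrow> lpoly_a n a z = lpoly_a n a' z" and k: "k < n"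
  shows "a k = a' k"
proof -
  have "\<forall>w. w \<noteq> 0 \<longrightarrow> (\<Sum>k<n. (a k - a' k) * w^k) = 0"
  proof (intro allI impI)
    fix w :: complex assume w: "w \<noteq> 0"
    have "lpoly_a n a (inverse w) = lpoly_a n a' (inverse w)" using h w by simp
    then show "(\<Sum>k<n. (a k - a' k) * w^k) = 0"
      unfolding lpoly_a_def by (simp add: algebra_simps sum_subtractf)
  qed
  from coeff_eq0[OF this k] show ?thesis by simp
qed

lemma lpb_coeff:
  assumes h: "\<forall>z. z \<noteq> 0 \<longrightarrow> lpoly_b n b z = lpoly_b n b' z" and k: "k < n"
  shows "b k = b' k"
proof -
  have "\<forall>w. w \<noteq> 0 \<longrightarrow> (\<Sum>k<n. (b k - b' k) * w^k) = 0"
  proof (intro allI impI)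
    fix w :: complex assume w: "w \<noteq> 0"
    have "lpoly_b n b w = lpoly_b n b' w" using h w by simp
    then show "(\<Sum>k<n. (b k - b' k) * w^k) = 0"
      unfolding lpoly_b_def by (simp add: algebra_simps sum_subtractf)
  qed
  from coeff_eq0[OF this k] show ?thesis by simp
qed

lemma mat2_inj: "mat2 p q r s = mat2 p' q' r' s' \<Longrightarrow> p = p' \<and> q = q'"
  by (metis mat2_nth(1) mat2_nth(2))

lemma has_nlft_unique:
  assumes n: "n \<ge> 1" and h: "has_nlft n \<gamma> (a, b)"
  shows "\<gamma> = invn n (a, b)"
proof
  fix k
  have z: "\<gamma> k = 0" if "k \<ge> n" for k using h that by (simp add: has_nlft_def)
  have eq: "\<forall>z. z \<noteq> 0 \<longrightarrow> lpoly_a n a z = lpoly_a n (fst (fwd n \<gamma>)) z \<and> lpoly_b n b z = lpoly_b n (snd (fwd n \<gamma>)) z"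
  proof (intro allI impI)
    fix z :: complex assume z: "z \<noteq> 0"
    have "MM n (fwd n \<gamma>) z = mat2 (lpoly_a n a z) (lpoly_b n b z) (- star (lpoly_b n b) z) (star (lpoly_a n a) z)"
      using h z fwd_mat'[OF z n, of \<gamma>] by (simp add: has_nlft_def)
    then show "lpoly_a n a z = lpoly_a n (fst (fwd n \<gamma>)) z \<and> lpoly_b n b z = lpoly_b n (snd (fwd n \<gamma>)) z"
      unfolding MM_def by (metis mat2_inj)
  qed
  have ca: "a j = fst (fwd n \<gamma>) j" if "j < n" for j
    using lpa_coeff[OF _ that] eq by blast
  have cb: "b j = snd (fwd n \<gamma>) j" if "j < n" for j
    using lpb_coeff[OF _ that] eq by blast
  show "\<gamma> k = invn n (a, b) k"
  proof (cases "k < n")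
    case True
    have "invf (a, b) k = invf (fwd n \<gamma>) k"
      by (rule invf_local) (use True ca cb in auto)
    then show ?thesis using True invf_fwd[OF True] by (simp add: invn_def)
  next
    case False then show ?thesis using z by (simp add: invn_def)
  qed
qed




lemma sum_at0_rev: "(\<Sum>k<Suc n. f k * (0::complex)^(n-k)) = f n"
proof -
  have "(\<Sum>k<n. f k * (0::complex)^(n-k)) = 0" by (rule sum.neutral) auto
  then show ?thesis by simp
qed

lemma sum_at0: "(\<Sum>k<Suc n. f k * (0::complex)^k) = f 0"
  by (subst sum.lessThan_Suc_shift) simp

lemma zero_by_cont:
  fixes P :: "complex \<Rightarrow> complex"
  assumes c: "isCont P 0" and z: "\<And>z. z \<noteq> 0 \<Longrightarrow> P z = 0"
  shows "P 0 = 0"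
proof -
  have 1: "(P \<longlongrightarrow> P 0) (at 0)" using c by (simp add: isCont_def)
  have 2: "(P \<longlongrightarrow> 0) (at 0)"
    by (rule tendsto_eventually) (auto simp: eventually_at_filter z)
  show ?thesis using tendsto_unique[OF _ 1 2] by simp
qed

lemma top_coeff:
  fixes a b :: "nat \<Rightarrow> complex"
  assumes n: "n \<ge> 1" and id: "\<forall>z. z \<noteq> 0 \<longrightarrow> lpoly_a (Suc n) a z * star (lpoly_a (Suc n) a) z + lpoly_b (Suc n) b z * star (lpoly_b (Suc n) b) z = 1"
  shows "a n * cnj (a 0) + b 0 * cnj (b n) = 0"
proof -
  define P where "P z = (\<Sum>k<Suc n. a k * z^(n-k)) * (\<Sum>k<Suc n. cnj (a k) * z^k) + (\<Sum>k<Suc n. b k * z^k) * (\<Sum>k<Suc n. cnj (b k) * z^(n-k)) - z^n" for z :: complex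
  have cont: "isCont P 0" unfolding P_def by (intro continuous_intros)
  have zero: "P z = 0" if z: "z \<noteq> 0" for z
  proof -
    have pw: "z^n * inverse z ^ k = z^(n-k)" if "k < Suc n" for k
      using that z by (simp add: power_diff power_inverse divide_inverse)
    have 1: "z^n * lpoly_a (Suc n) a z = (\<Sum>k<Suc n. a k * z^(n-k))"
      unfolding lpoly_a_def sum_distrib_left by (rule sum.cong) (auto simp: pw[symmetric] algebra_simps)
    have 2: "z^n * star (lpoly_b (Suc n) b) z = (\<Sum>k<Suc n. cnj (b k) * z^(n-k))"
      unfolding star_b sum_distrib_left by (rule sum.cong) (auto simp: pw[symmetric] algebra_simps)
    have "P z = z^n * (lpoly_a (Suc n) a z * star (lpoly_a (Suc n) a) z + lpoly_b (Suc n) b z * star (lpoly_b (Suc n) b) z) - z^n"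
      unfolding P_def 1[symmetric] 2[symmetric] star_a lpoly_b_def by (simp add: algebra_simps)
    then show ?thesis using id z by simp
  qed
  have P0: "P 0 = a n * cnj (a 0) + b 0 * cnj (b n)"
    unfolding P_def sum_at0_rev sum_at0 using n by simp
  show ?thesis using zero_by_cont[OF cont zero] P0 by simp
qed




lemma strip_S:
  assumes n: "n \<ge> 1" and p: "p \<in> S_set (Suc n)"
  shows "strip p \<in> S_set n"
proof -
  obtain a b where pab: "p = (a, b)" by force
  have za: "\<forall>k\<ge>Suc n. a k = 0" and zb: "\<forall>k\<ge>Suc n. b k = 0" and im: "Im (a 0) = 0"
    and re: "Re (a 0) > 0"
    and id: "\<forall>z. z \<noteq> 0 \<longrightarrow> lpoly_a (Suc n) a z * star (lpoly_a (Suc n) a) z + lpoly_b (Suc n) b z * star (lpoly_b (Suc n) b) z = 1"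
    using p unfolding pab S_set_def by auto
  define g where "g = gam0 p"
  define s where "s = sg g"
  have cs: "cnj s = s" by (simp add: s_def)
  have a0nz: "a 0 \<noteq> 0" using re by auto
  have ca: "cnj (a 0) = a 0" using im by (rule real_cnj)
  have b0: "b 0 = g * a 0" using a0nz by (simp add: g_def gam0_def pab)
  define a1 where "a1 = fst (strip p)"
  define b1 where "b1 = snd (strip p)"
  have sp: "strip p = (a1, b1)" by (simp add: a1_def b1_def)
  have a1: "a1 k = s * (a k + g * cnj (b k))" for k
    by (simp add: a1_def strip_def s_def g_def pab)
  have b1: "b1 k = s * (b (Suc k) - g * cnj (a (Suc k)))" for k
    by (simp add: b1_def strip_def s_def g_def pab)
  have "a n * cnj (a 0) + b 0 * cnj (b n) = 0" by (rule top_coeff[OF n id])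
  then have "(a n + g * cnj (b n)) * a 0 = 0" unfolding ca b0 by (simp add: algebra_simps)
  then have top: "a n + g * cnj (b n) = 0" using a0nz by simp
  have za1: "\<forall>k\<ge>n. a1 k = 0"
  proof (intro allI impI)
    fix k assume k: "k \<ge> n"
    show "a1 k = 0"
    proof (cases "k = n")
      case True then show ?thesis using top a1 by simp
    next
      case False then have "k \<ge> Suc n" using k by simp
      then show ?thesis using za zb a1 by simp
    qed
  qed
  have zb1: "\<forall>k\<ge>n. b1 k = 0" using za zb b1 by simp
  define r where "r = Re (a 0)"
  have ar: "a 0 = of_real r" using im by (simp add: r_def complex_eq_iff)
  have bb: "b 0 * cnj (b 0) = of_real ((cmod (b 0))^2)" by (metis complex_norm_square of_real_power)
  have "a 0 + g * cnj (b 0) = of_real r + of_real ((cmod (b 0))^2) / of_real r"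
    unfolding g_def gam0_def pab using bb ar by simp
  also have "\<dots> = of_real (r + (cmod (b 0))^2 / r)" by simp
  finally have x: "a 0 + g * cnj (b 0) = of_real (r + (cmod (b 0))^2 / r)" .
  define \<sigma> where "\<sigma> = 1 / sqrt (1 + (cmod g)^2)"
  have sig: "s = of_real \<sigma>" by (simp add: s_def sg_def \<sigma>_def)
  have sigpos: "\<sigma> > 0" unfolding \<sigma>_def using add_pos_nonneg[of 1 "(cmod g)^2"] by simp
  have rpos: "r > 0" using re r_def by simp
  have a10: "a1 0 = of_real (\<sigma> * (r + (cmod (b 0))^2 / r))" unfolding a1 x sig by simp
  have "\<sigma> * (r + (cmod (b 0))^2 / r) > 0" using sigpos rpos by (intro mult_pos_pos add_pos_nonneg) auto
  then have a10': "Im (a1 0) = 0" "Re (a1 0) > 0" unfolding a10 by auto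
  have id1: "lpoly_a n a1 z * star (lpoly_a n a1) z + lpoly_b n b1 z * star (lpoly_b n b1) z = 1"
    if z: "z \<noteq> 0" for z
  proof -
    define w where "w = inverse z"
    define A where "A = lpoly_a (Suc n) a z"
    define As where "As = star (lpoly_a (Suc n) a) z"
    define B where "B = lpoly_b (Suc n) b z"
    define Bs where "Bs = star (lpoly_b (Suc n) b) z"
    have tr: "lpoly_a (Suc n) a1 = lpoly_a n a1" using lpoly_a_trunc[OF za1, of "Suc n"] by auto
    have F1: "lpoly_a n a1 z = s * (A + g * Bs)"
      unfolding tr[symmetric] A_def Bs_def lpoly_a_def star_b a1
      by (simp add: algebra_simps sum.distrib sum_distrib_left cs)
    have F2: "star (lpoly_a n a1) z = s * (As + cnj g * B)"
      unfolding tr[symmetric] As_def B_def lpoly_b_def star_a a1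
      by (simp add: algebra_simps sum.distrib sum_distrib_left cs)
    have prvb: "prv b1 k = s * (b k - g * cnj (a k))" for k
      by (cases k) (simp_all add: b1 b0 ca)
    have F3: "z * lpoly_b n b1 z = s * (B - g * As)"
    proof -
      have "z * lpoly_b n b1 z = (\<Sum>k<Suc n. prv b1 k * z^k)"
        unfolding lpoly_b_def using sum_prv[where h="\<lambda>x. x" and \<beta>=b1 and N=n and x=z] by simp
      also have "\<dots> = s * (B - g * As)"
        unfolding prvb B_def As_def lpoly_b_def star_a
        by (simp add: algebra_simps sum_subtractf sum_distrib_left cs)
      finally show ?thesis .
    qed
    have F4: "w * star (lpoly_b n b1) z = s * (Bs - cnj g * A)"
    proof -
      have "w * star (lpoly_b n b1) z = (\<Sum>k<Suc n. cnj (prv b1 k) * w^k)"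
        unfolding star_b w_def using sum_prv[where h=cnj and \<beta>=b1 and N=n and x="inverse z"] by simp
      also have "\<dots> = s * (Bs - cnj g * A)"
        unfolding prvb Bs_def A_def lpoly_a_def star_b w_def
        by (simp add: algebra_simps sum_subtractf sum_distrib_left cs)
      finally show ?thesis .
    qed
    have zw: "z * w = 1" using z by (simp add: w_def)
    have "lpoly_b n b1 z * star (lpoly_b n b1) z = (z * lpoly_b n b1 z) * (w * star (lpoly_b n b1) z)"
      using zw by (simp add: algebra_simps)
    then have "lpoly_a n a1 z * star (lpoly_a n a1) z + lpoly_b n b1 z * star (lpoly_b n b1) z
        = s * (A + g * Bs) * (s * (As + cnj g * B)) + s * (B - g * As) * (s * (Bs - cnj g * A))"
      unfolding F1 F2 F3 F4 by simp
    also have "\<dots> = s * s * (1 + g * cnj g) * (A * As + B * Bs)" by (simp add: algebra_simps)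
    also have "\<dots> = 1" using id z unfolding A_def As_def B_def Bs_def s_def sg_sq by simp
    finally show ?thesis .
  qed
  show ?thesis unfolding sp S_set_def using za1 zb1 a10' id1 by auto
qed




lemma S1_strip:
  assumes p: "p \<in> S_set 1"
  shows "strip p = fwd 0 \<gamma>"
proof -
  obtain a b where pab: "p = (a, b)" by force
  have za: "\<forall>k\<ge>1. a k = 0" and zb: "\<forall>k\<ge>1. b k = 0" and im: "Im (a 0) = 0"
    and re: "Re (a 0) > 0"
    and id: "\<forall>z. z \<noteq> 0 \<longrightarrow> lpoly_a 1 a z * star (lpoly_a 1 a) z + lpoly_b 1 b z * star (lpoly_b 1 b) z = 1"
    using p unfolding pab S_set_def by auto
  define g where "g = gam0 p"
  define s where "s = sg g"
  have a0nz: "a 0 \<noteq> 0" using re by auto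
  have ca: "cnj (a 0) = a 0" using im by (rule real_cnj)
  have b0: "b 0 = g * a 0" using a0nz by (simp add: g_def gam0_def pab)
  have "lpoly_a 1 a 1 * star (lpoly_a 1 a) 1 + lpoly_b 1 b 1 * star (lpoly_b 1 b) 1 = 1" using id by simp
  then have e: "a 0 * a 0 + b 0 * cnj (b 0) = 1" by (simp add: lpoly_a_def lpoly_b_def star_a star_b ca)
  have X: "a 0 * a 0 * (1 + g * cnj g) = 1" using e unfolding b0 by (simp add: ca algebra_simps)
  have Y: "s * s * (1 + g * cnj g) = 1" unfolding s_def by (rule sg_sq)
  have Xnz: "1 + g * cnj g \<noteq> 0" using X by auto
  have "s * s = a 0 * a 0" using X Y Xnz by (metis mult_right_cancel)
  then have "(s - a 0) * (s + a 0) = 0" by (simp add: algebra_simps)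
  moreover have "s + a 0 \<noteq> 0"
  proof
    assume "s + a 0 = 0"
    then have "Re (s + a 0) = 0" by simp
    then show False using re sg_pos(1)[of g] unfolding s_def by simp
  qed
  ultimately have sa: "s = a 0" by simp
  have "fst (strip p) 0 = s * (a 0 + g * cnj (b 0))" by (simp add: strip_def s_def g_def pab)
  also have "\<dots> = a 0 * a 0 * (1 + g * cnj g)" by (simp add: sa b0 ca algebra_simps)
  finally have 1: "fst (strip p) 0 = 1" using X by simp
  have 2: "fst (strip p) k = 0" if "k \<ge> 1" for k
    using za zb that unfolding strip_def pab by simp
  have 3: "snd (strip p) k = 0" for k
    using za zb unfolding strip_def pab by simp
  show ?thesis using 1 2 3 by (auto simp: prod_eq_iff fun_eq_iff)
qed

lemma S_props: "p \<in> S_set n \<Longrightarrow> Im (fst p 0) = 0 \<and> fst p 0 \<noteq> 0"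
  by (auto simp: S_set_def)

lemma S_fwd: "p \<in> S_set (Suc m) \<Longrightarrow> fwd (Suc m) (invf p) = p"
proof (induction m arbitrary: p)
  case 0
  have "fwd 1 (invf p) = up (gam0 p) (strip p)"
    using S1_strip[of p] 0 by simp
  then show ?case using up_strip S_props[OF 0] by simp
next
  case (Suc m)
  have s: "strip p \<in> S_set (Suc m)" by (rule strip_S) (use Suc.prems in auto)
  have "fwd (Suc (Suc m)) (invf p) = up (gam0 p) (fwd (Suc m) (invf (strip p)))" by simp
  also have "\<dots> = up (gam0 p) (strip p)" using Suc.IH[OF s] by simp
  also have "\<dots> = p" using up_strip S_props[OF Suc.prems] by simp
  finally show ?case .
qed

lemma has_nlft_exists:
  assumes n: "n \<ge> 1" and p: "p \<in> S_set n"
  shows "has_nlft n (invn n p) p"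
proof -
  obtain m where m: "n = Suc m" using n by (cases n) auto
  have "fwd n (invn n p) = fwd n (invf p)" by (rule fwd_cong) (simp add: invn_def)
  also have "\<dots> = p" using S_fwd p m by simp
  finally have f: "fwd n (invn n p) = p" .
  show ?thesis unfolding has_nlft_def
    using fwd_mat'[OF _ n, of _ "invn n p"] f by (auto simp: invn_def MM_def)
qed

lemma inv_nlft_eq:
  assumes n: "n \<ge> 1" and p: "p \<in> S_set n"
  shows "inv_nlft n p = invn n p"
  unfolding inv_nlft_def
proof (rule the_equality)
  show "has_nlft n (invn n p) p" by (rule has_nlft_exists[OF n p])
  fix \<gamma> assume "has_nlft n \<gamma> p"
  then show "\<gamma> = invn n p" using has_nlft_unique[OF n, of \<gamma> "fst p" "snd p"] by simp
qed




definition BL :: "'p set \<Rightarrow> ('p \<Rightarrow> 'p \<Rightarrow> real) \<Rightarrow> ('p \<Rightarrow> complex) \<Rightarrow> bool" where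
  "BL S d f \<longleftrightarrow> (\<exists>B L. B \<ge> 0 \<and> L \<ge> 0 \<and> (\<forall>p\<in>S. cmod (f p) \<le> B \<and> (\<forall>q\<in>S. cmod (f p - f q) \<le> L * d p q)))"

lemma BLI: "B \<ge> 0 \<Longrightarrow> L \<ge> 0 \<Longrightarrow> (\<And>p. p \<in> S \<Longrightarrow> cmod (f p) \<le> B) \<Longrightarrow> (\<And>p q. p \<in> S \<Longrightarrow> q \<in> S \<Longrightarrow> cmod (f p - f q) \<le> L * d p q) \<Longrightarrow> BL S d f"
  unfolding BL_def by blast

lemma BLE: assumes "BL S d f"
  obtains B L where "B \<ge> 0" "L \<ge> 0" "\<And>p. p \<in> S \<Longrightarrow> cmod (f p) \<le> B" "\<And>p q. p \<in> S \<Longrightarrow> q \<in> S \<Longrightarrow> cmod (f p - f q) \<le> L * d p q"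
  using assms unfolding BL_def by blast

lemma BL_const: "BL S d (\<lambda>p. c)"
  by (rule BLI[of "cmod c" 0]) auto

lemma BL_add: assumes "BL S d f" "BL S d g" shows "BL S d (\<lambda>p. f p + g p)"
proof -
  obtain B1 L1 where 1: "B1 \<ge> 0" "L1 \<ge> 0" "\<And>p. p \<in> S \<Longrightarrow> cmod (f p) \<le> B1" "\<And>p q. p \<in> S \<Longrightarrow> q \<in> S \<Longrightarrow> cmod (f p - f q) \<le> L1 * d p q" using assms(1) unfolding BL_def by blast
  obtain B2 L2 where 2: "B2 \<ge> 0" "L2 \<ge> 0" "\<And>p. p \<in> S \<Longrightarrow> cmod (g p) \<le> B2" "\<And>p q. p \<in> S \<Longrightarrow> q \<in> S \<Longrightarrow> cmod (g p - g q) \<le> L2 * d p q" using assms(2) unfolding BL_def by blast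
  show ?thesis
  proof (rule BLI[of "B1 + B2" "L1 + L2"])
    show "cmod (f p + g p) \<le> B1 + B2" if "p \<in> S" for p
      using 1(3)[OF that] 2(3)[OF that] norm_triangle_ineq[of "f p" "g p"] by linarith
    show "cmod (f p + g p - (f q + g q)) \<le> (L1 + L2) * d p q" if "p \<in> S" "q \<in> S" for p q
    proof -
      have "cmod (f p + g p - (f q + g q)) \<le> cmod (f p - f q) + cmod (g p - g q)"
        by (metis add_diff_add norm_triangle_ineq)
      then show ?thesis using 1(4)[OF that] 2(4)[OF that] by (simp add: distrib_right)
    qed
  qed (use 1 2 in auto)
qed

lemma BL_uminus: assumes "BL S d f" shows "BL S d (\<lambda>p. - f p)"
proof -
  obtain B1 L1 where 1: "B1 \<ge> 0" "L1 \<ge> 0" "\<And>p. p \<in> S \<Longrightarrow> cmod (f p) \<le> B1" "\<And>p q. p \<in> S \<Longrightarrow> q \<in> S \<Longrightarrow> cmod (f p - f q) \<le> L1 * d p q" using assms(1) unfolding BL_def by blast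
  show ?thesis
    by (rule BLI[of B1 L1]) (use 1 in \<open>auto simp: norm_minus_commute\<close>)
qed

lemma BL_diff: assumes "BL S d f" "BL S d g" shows "BL S d (\<lambda>p. f p - g p)"
  using BL_add[OF assms(1) BL_uminus[OF assms(2)]] by simp

lemma BL_cnj: assumes "BL S d f" shows "BL S d (\<lambda>p. cnj (f p))"
proof -
  obtain B1 L1 where 1: "B1 \<ge> 0" "L1 \<ge> 0" "\<And>p. p \<in> S \<Longrightarrow> cmod (f p) \<le> B1" "\<And>p q. p \<in> S \<Longrightarrow> q \<in> S \<Longrightarrow> cmod (f p - f q) \<le> L1 * d p q" using assms(1) unfolding BL_def by blast
  show ?thesis
    by (rule BLI[of B1 L1]) (use 1 in \<open>auto simp flip: complex_cnj_diff\<close>)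
qed

lemma BL_mult: assumes "BL S d f" "BL S d g" shows "BL S d (\<lambda>p. f p * g p)"
proof -
  obtain B1 L1 where 1: "B1 \<ge> 0" "L1 \<ge> 0" "\<And>p. p \<in> S \<Longrightarrow> cmod (f p) \<le> B1" "\<And>p q. p \<in> S \<Longrightarrow> q \<in> S \<Longrightarrow> cmod (f p - f q) \<le> L1 * d p q" using assms(1) unfolding BL_def by blast
  obtain B2 L2 where 2: "B2 \<ge> 0" "L2 \<ge> 0" "\<And>p. p \<in> S \<Longrightarrow> cmod (g p) \<le> B2" "\<And>p q. p \<in> S \<Longrightarrow> q \<in> S \<Longrightarrow> cmod (g p - g q) \<le> L2 * d p q" using assms(2) unfolding BL_def by blast
  show ?thesis
  proof (rule BLI[of "B1 * B2" "B1 * L2 + B2 * L1"])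
    show "cmod (f p * g p) \<le> B1 * B2" if "p \<in> S" for p
      unfolding norm_mult using 1(3)[OF that] 2(3)[OF that] 1(1) 2(1) by (intro mult_mono) auto
    show "cmod (f p * g p - f q * g q) \<le> (B1 * L2 + B2 * L1) * d p q" if "p \<in> S" "q \<in> S" for p q
    proof -
      have "f p * g p - f q * g q = f p * (g p - g q) + g q * (f p - f q)" by (simp add: algebra_simps)
      then have "cmod (f p * g p - f q * g q) \<le> cmod (f p) * cmod (g p - g q) + cmod (g q) * cmod (f p - f q)"
        by (metis norm_mult norm_triangle_ineq)
      also have "\<dots> \<le> B1 * (L2 * d p q) + B2 * (L1 * d p q)"
        using 1(3)[OF that(1)] 2(3)[OF that(2)] 1(4)[OF that] 2(4)[OF that] 1(1) 2(1)
        by (intro add_mono mult_mono) auto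
      finally show ?thesis by (simp add: algebra_simps)
    qed
  qed (use 1 2 in auto)
qed

lemma BL_inverse: assumes "BL S d f" and e: "e > 0" and lb: "\<And>p. p \<in> S \<Longrightarrow> cmod (f p) \<ge> e"
  shows "BL S d (\<lambda>p. inverse (f p))"
proof -
  obtain B1 L1 where 1: "B1 \<ge> 0" "L1 \<ge> 0" "\<And>p. p \<in> S \<Longrightarrow> cmod (f p) \<le> B1" "\<And>p q. p \<in> S \<Longrightarrow> q \<in> S \<Longrightarrow> cmod (f p - f q) \<le> L1 * d p q" using assms(1) unfolding BL_def by blast
  show ?thesis
  proof (rule BLI[of "1/e" "L1 / (e*e)"])
    show "cmod (inverse (f p)) \<le> 1/e" if "p \<in> S" for p
    proof -
      have "1 / cmod (f p) \<le> 1 / e" using lb[OF that] e by (intro frac_le) auto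
      then show ?thesis by (metis norm_inverse inverse_eq_divide)
    qed
    show "cmod (inverse (f p) - inverse (f q)) \<le> L1 / (e*e) * d p q" if "p \<in> S" "q \<in> S" for p q
    proof -
      have nz: "f p \<noteq> 0" "f q \<noteq> 0" using lb that e by force+
      have "inverse (f p) - inverse (f q) = (f q - f p) / (f p * f q)"
        using nz by (simp add: field_simps)
      then have eq: "cmod (inverse (f p) - inverse (f q)) = cmod (f p - f q) / (cmod (f p) * cmod (f q))"
        by (simp add: norm_divide norm_mult norm_minus_commute)
      have ee: "e * e \<le> cmod (f p) * cmod (f q)" using lb that e by (intro mult_mono) auto
      have e2: "0 < e * e" using e by simp
      have p1: "0 < cmod (f p) * cmod (f q)" using ee e2 by linarith
      have pp: "0 < cmod (f p) * cmod (f q) * (e * e)" using p1 e2 by (rule mult_pos_pos)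
      have "cmod (f p - f q) / (cmod (f p) * cmod (f q)) \<le> cmod (f p - f q) / (e * e)"
        using ee pp by (intro divide_left_mono) auto
      also have "\<dots> \<le> L1 * d p q / (e * e)"
        using 1(4)[OF that] e by (intro divide_right_mono) auto
      finally show ?thesis using eq by simp
    qed
  qed (use 1 e in auto)
qed

lemma inv_sqrt_lip:
  fixes x y :: real
  assumes "x \<ge> 0" "y \<ge> 0"
  shows "\<bar>1 / sqrt (1 + x) - 1 / sqrt (1 + y)\<bar> \<le> \<bar>x - y\<bar>"
proof -
  define u where "u = sqrt (1 + x)"
  define v where "v = sqrt (1 + y)"
  have u1: "u \<ge> 1" "v \<ge> 1" using assms by (auto simp: u_def v_def)
  have uu: "u * u = 1 + x" "v * v = 1 + y" using assms by (simp_all add: u_def v_def)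
  have "1 / u - 1 / v = (v - u) / (u * v)" using u1 by (simp add: field_simps)
  then have "\<bar>1 / u - 1 / v\<bar> = \<bar>v - u\<bar> / (u * v)" using u1 by simp
  also have "\<dots> \<le> \<bar>v - u\<bar> / 1"
  proof (rule divide_left_mono)
    show "1 \<le> u * v" using mult_mono[of 1 u 1 v] u1 by simp
  qed (use u1 in auto)
  also have "\<dots> \<le> \<bar>v - u\<bar> * (v + u)" using u1 by (simp add: mult_le_cancel_left1)
  also have "\<dots> = \<bar>(v - u) * (v + u)\<bar>" using u1 by (simp add: abs_mult)
  also have "(v - u) * (v + u) = y - x" using uu by (simp add: algebra_simps)
  finally show ?thesis unfolding u_def v_def by linarith
qed

lemma cmod_sg_le1: "cmod (sg g) \<le> 1"
proof -
  have "sqrt (1 + (cmod g)^2) \<ge> 1" by simp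
  then have "1 / sqrt (1 + (cmod g)^2) \<le> 1" using frac_le[of 1 1 1 "sqrt (1 + (cmod g)^2)"] by simp
  then show ?thesis unfolding sg_def norm_of_real by simp
qed

lemma sg_lip: "cmod (sg g - sg h) \<le> (cmod g + cmod h) * cmod (g - h)"
proof -
  have "cmod (sg g - sg h) = \<bar>1 / sqrt (1 + (cmod g)^2) - 1 / sqrt (1 + (cmod h)^2)\<bar>"
    unfolding sg_def by (metis norm_of_real of_real_diff)
  also have "\<dots> \<le> \<bar>(cmod g)^2 - (cmod h)^2\<bar>" by (rule inv_sqrt_lip) auto
  also have "\<dots> = (cmod g + cmod h) * \<bar>cmod g - cmod h\<bar>"
  proof -
    have "(cmod g)^2 - (cmod h)^2 = (cmod g + cmod h) * (cmod g - cmod h)" by (simp add: power2_eq_square algebra_simps)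
    then show ?thesis by (simp add: abs_mult)
  qed
  also have "\<dots> \<le> (cmod g + cmod h) * cmod (g - h)"
    by (intro mult_left_mono norm_triangle_ineq3) auto
  finally show ?thesis .
qed

lemma BL_sg: assumes "BL S d f" shows "BL S d (\<lambda>p. sg (f p))"
proof -
  obtain B1 L1 where 1: "B1 \<ge> 0" "L1 \<ge> 0" "\<And>p. p \<in> S \<Longrightarrow> cmod (f p) \<le> B1" "\<And>p q. p \<in> S \<Longrightarrow> q \<in> S \<Longrightarrow> cmod (f p - f q) \<le> L1 * d p q" using assms(1) unfolding BL_def by blast
  show ?thesis
  proof (rule BLI[of 1 "2 * B1 * L1"])
    show "cmod (sg (f p) - sg (f q)) \<le> 2 * B1 * L1 * d p q" if "p \<in> S" "q \<in> S" for p q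
    proof -
      have "cmod (sg (f p) - sg (f q)) \<le> (cmod (f p) + cmod (f q)) * cmod (f p - f q)" by (rule sg_lip)
      also have "\<dots> \<le> (2 * B1) * (L1 * d p q)"
        using 1(3)[OF that(1)] 1(3)[OF that(2)] 1(4)[OF that] 1(1) by (intro mult_mono) auto
      finally show ?thesis by (simp add: algebra_simps)
    qed
  qed (use 1 cmod_sg_le1 in auto)
qed




definition Xs :: "nat \<Rightarrow> real \<Rightarrow> real \<Rightarrow> ((nat \<Rightarrow> complex) \<times> (nat \<Rightarrow> complex)) set" where
  "Xs k C \<delta> = {p. Im (fst p 0) = 0 \<and> Re (fst p 0) > \<delta> \<and> (\<forall>j\<le>k. cmod (fst p j) \<le> C \<and> cmod (snd p j) \<le> C)}"

definition dk :: "nat \<Rightarrow> (nat \<Rightarrow> complex) \<times> (nat \<Rightarrow> complex) \<Rightarrow> (nat \<Rightarrow> complex) \<times> (nat \<Rightarrow> complex) \<Rightarrow> real" where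
  "dk k p q = (\<Sum>j\<le>k. cmod (fst p j - fst q j) + cmod (snd p j - snd q j))"

lemma dk_ge: "j \<le> k \<Longrightarrow> cmod (fst p j - fst q j) + cmod (snd p j - snd q j) \<le> dk k p q"
  unfolding dk_def by (rule member_le_sum[of j "{..k}" "\<lambda>j. cmod (fst p j - fst q j) + cmod (snd p j - snd q j)"]) auto

lemma dk_nonneg: "dk k p q \<ge> 0"
  unfolding dk_def by (intro sum_nonneg) auto

lemma BL_coord_a: "j \<le> k \<Longrightarrow> BL (Xs k C \<delta>) (dk k) (\<lambda>p. fst p j)"
proof (rule BLI[of "\<bar>C\<bar>" 1])
  fix p q assume j: "j \<le> k"
  show "p \<in> Xs k C \<delta> \<Longrightarrow> cmod (fst p j) \<le> \<bar>C\<bar>" using j by (force simp: Xs_def)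
  show "cmod (fst p j - fst q j) \<le> 1 * dk k p q" using dk_ge[OF j, of p q] norm_ge_zero[of "snd p j - snd q j"] by linarith
qed auto

lemma BL_coord_b: "j \<le> k \<Longrightarrow> BL (Xs k C \<delta>) (dk k) (\<lambda>p. snd p j)"
proof (rule BLI[of "\<bar>C\<bar>" 1])
  fix p q assume j: "j \<le> k"
  show "p \<in> Xs k C \<delta> \<Longrightarrow> cmod (snd p j) \<le> \<bar>C\<bar>" using j by (force simp: Xs_def)
  show "cmod (snd p j - snd q j) \<le> 1 * dk k p q" using dk_ge[OF j, of p q] norm_ge_zero[of "fst p j - fst q j"] by linarith
qed auto

lemma Xs_a0: "p \<in> Xs k C \<delta> \<Longrightarrow> cmod (fst p 0) \<ge> \<delta>"
  unfolding Xs_def using abs_Re_le_cmod[of "fst p 0"] by auto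

lemma BL_gam0: assumes "\<delta> > 0" shows "BL (Xs k C \<delta>) (dk k) gam0"
proof -
  have e: "gam0 = (\<lambda>p. snd p 0 * inverse (fst p 0))" by (auto simp: fun_eq_iff gam0_def divide_inverse)
  show ?thesis unfolding e
    by (intro BL_mult BL_coord_b BL_inverse[OF BL_coord_a assms] Xs_a0) auto
qed

lemma BL_strip_a: assumes "\<delta> > 0" "j \<le> k" shows "BL (Xs (Suc k) C \<delta>) (dk (Suc k)) (\<lambda>p. fst (strip p) j)"
proof -
  have e: "(\<lambda>p. fst (strip p) j) = (\<lambda>p. sg (gam0 p) * (fst p j + gam0 p * cnj (snd p j)))"
    by (simp add: strip_def)
  show ?thesis unfolding e
    by (intro BL_mult BL_sg BL_gam0 BL_add BL_cnj BL_coord_a BL_coord_b assms) (use assms in auto)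
qed

lemma BL_strip_b: assumes "\<delta> > 0" "j \<le> k" shows "BL (Xs (Suc k) C \<delta>) (dk (Suc k)) (\<lambda>p. snd (strip p) j)"
proof -
  have e: "(\<lambda>p. snd (strip p) j) = (\<lambda>p. sg (gam0 p) * (snd p (Suc j) - gam0 p * cnj (fst p (Suc j))))"
    by (simp add: strip_def)
  show ?thesis unfolding e
    by (intro BL_mult BL_sg BL_gam0 BL_diff BL_cnj BL_coord_a BL_coord_b assms) (use assms in auto)
qed

lemma strip_a0:
  assumes im: "Im (fst p 0) = 0" and re: "Re (fst p 0) > 0"
  shows "Im (fst (strip p) 0) = 0 \<and> Re (fst (strip p) 0) \<ge> Re (fst p 0)"
proof -
  obtain a b where pab: "p = (a, b)" by force
  define r where "r = Re (a 0)"
  have rpos: "r > 0" using re by (simp add: r_def pab)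
  have ar: "a 0 = of_real r" using im by (simp add: r_def complex_eq_iff pab)
  define g where "g = gam0 p"
  have gd: "g = b 0 / of_real r" by (simp add: g_def gam0_def pab ar)
  have bb: "b 0 * cnj (b 0) = of_real ((cmod (b 0))^2)" by (metis complex_norm_square of_real_power)
  have "a 0 + g * cnj (b 0) = of_real r + of_real ((cmod (b 0))^2) / of_real r"
    unfolding gd using bb ar by simp
  also have "\<dots> = of_real (r + (cmod (b 0))^2 / r)" by simp
  finally have x: "a 0 + g * cnj (b 0) = of_real (r + (cmod (b 0))^2 / r)" .
  have cg: "cmod g = cmod (b 0) / r" unfolding gd using rpos by (simp add: norm_divide)
  define t where "t = (cmod g)^2"
  have t0: "t \<ge> 0" by (simp add: t_def)
  have rt: "r + (cmod (b 0))^2 / r = r * (1 + t)"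
    using rpos unfolding t_def cg by (simp add: field_simps power2_eq_square)
  have "fst (strip p) 0 = sg g * (a 0 + g * cnj (b 0))" by (simp add: strip_def pab g_def)
  also have "\<dots> = of_real (1 / sqrt (1 + t) * (r * (1 + t)))" unfolding x rt sg_def t_def by simp
  finally have f: "fst (strip p) 0 = of_real (1 / sqrt (1 + t) * (r * (1 + t)))" .
  have "1 / sqrt (1 + t) * (r * (1 + t)) = r * ((1 + t) / sqrt (1 + t))" by simp
  also have "\<dots> = r * sqrt (1 + t)" using t0 by (simp add: real_div_sqrt)
  also have "\<dots> \<ge> r" using rpos t0 by simp
  finally show ?thesis unfolding f by (simp add: r_def pab)
qed

lemma bnd_plus: "cmod s \<le> 1 \<Longrightarrow> cmod x \<le> C \<Longrightarrow> cmod y \<le> C \<Longrightarrow> cmod g \<le> G \<Longrightarrow> cmod (s * (x + g * cnj y)) \<le> C + G * C"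
proof -
  assume a: "cmod s \<le> 1" "cmod x \<le> C" "cmod y \<le> C" "cmod g \<le> G"
  have G0: "G \<ge> 0" using a(4) norm_ge_zero[of g] by linarith
  have "cmod (s * (x + g * cnj y)) \<le> 1 * cmod (x + g * cnj y)"
    unfolding norm_mult using a by (intro mult_right_mono) auto
  also have "\<dots> \<le> cmod x + cmod g * cmod y" by (metis mult_1 norm_mult norm_triangle_ineq complex_mod_cnj)
  also have "\<dots> \<le> C + G * C" using a G0 by (intro add_mono mult_mono) auto
  finally show ?thesis .
qed

lemma bnd_minus: "cmod s \<le> 1 \<Longrightarrow> cmod x \<le> C \<Longrightarrow> cmod y \<le> C \<Longrightarrow> cmod g \<le> G \<Longrightarrow> cmod (s * (x - g * cnj y)) \<le> C + G * C"
  using bnd_plus[of s x C y "-g" G] by simp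

lemma strip_Xs:
  assumes d: "\<delta> > 0" and C: "C \<ge> 0" and p: "p \<in> Xs (Suc k) C \<delta>"
  shows "strip p \<in> Xs k (C + (C / \<delta>) * C) \<delta>"
proof -
  have im: "Im (fst p 0) = 0" and re: "Re (fst p 0) > \<delta>" and bd: "\<And>j. j \<le> Suc k \<Longrightarrow> cmod (fst p j) \<le> C \<and> cmod (snd p j) \<le> C"
    using p by (auto simp: Xs_def)
  have a0: "cmod (fst p 0) \<ge> \<delta>" using Xs_a0[OF p] .
  have g: "cmod (gam0 p) \<le> C / \<delta>"
  proof -
    have "cmod (gam0 p) = cmod (snd p 0) / cmod (fst p 0)" by (simp add: gam0_def norm_divide)
    also have "\<dots> \<le> C / \<delta>" using bd[of 0] a0 d C by (intro frac_le) auto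
    finally show ?thesis .
  qed
  show ?thesis
    unfolding Xs_def
  proof (intro CollectI conjI allI impI)
    show "Im (fst (strip p) 0) = 0" "Re (fst (strip p) 0) > \<delta>" using strip_a0[OF im] re d by auto
  next
    fix j assume j: "j \<le> k"
    show "cmod (fst (strip p) j) \<le> C + C / \<delta> * C"
      unfolding strip_def fst_conv
      by (rule bnd_plus[OF cmod_sg_le1 _ _ g]) (use bd j in auto)
    show "cmod (snd (strip p) j) \<le> C + C / \<delta> * C"
      unfolding strip_def snd_conv
      by (rule bnd_minus[OF cmod_sg_le1 _ _ g]) (use bd j in auto)
  qed
qed

lemma lip_invf:
  assumes d: "\<delta> > 0"
  shows "C \<ge> 0 \<Longrightarrow> \<exists>L\<ge>0. \<forall>p\<in>Xs k C \<delta>. \<forall>q\<in>Xs k C \<delta>. cmod (invf p k - invf q k) \<le> L * dk k p q"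
proof (induction k arbitrary: C)
  case 0
  from BL_gam0[OF d, of 0 C] obtain B L where "L \<ge> 0"
    "\<forall>p\<in>Xs 0 C \<delta>. \<forall>q\<in>Xs 0 C \<delta>. cmod (gam0 p - gam0 q) \<le> L * dk 0 p q"
    unfolding BL_def by blast
  then show ?case by auto
next
  case (Suc k)
  define C' where "C' = C + (C / \<delta>) * C"
  have C'0: "C' \<ge> 0" using Suc.prems d by (simp add: C'_def)
  obtain L' where L': "L' \<ge> 0" "\<forall>p\<in>Xs k C' \<delta>. \<forall>q\<in>Xs k C' \<delta>. cmod (invf p k - invf q k) \<le> L' * dk k p q"
    using Suc.IH[OF C'0] by blast
  let ?X = "Xs (Suc k) C \<delta>"
  have "\<forall>j\<in>{..k}. \<exists>La. La \<ge> 0 \<and> (\<forall>p\<in>?X. \<forall>q\<in>?X. cmod (fst (strip p) j - fst (strip q) j) + cmod (snd (strip p) j - snd (strip q) j) \<le> La * dk (Suc k) p q)"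
  proof
    fix j assume "j \<in> {..k}" then have j: "j \<le> k" by simp
    obtain L1 where L1: "L1 \<ge> 0" "\<forall>p\<in>?X. \<forall>q\<in>?X. cmod (fst (strip p) j - fst (strip q) j) \<le> L1 * dk (Suc k) p q"
      using BL_strip_a[OF d j, of C] unfolding BL_def by blast
    obtain L2 where L2: "L2 \<ge> 0" "\<forall>p\<in>?X. \<forall>q\<in>?X. cmod (snd (strip p) j - snd (strip q) j) \<le> L2 * dk (Suc k) p q"
      using BL_strip_b[OF d j, of C] unfolding BL_def by blast
    show "\<exists>La. La \<ge> 0 \<and> (\<forall>p\<in>?X. \<forall>q\<in>?X. cmod (fst (strip p) j - fst (strip q) j) + cmod (snd (strip p) j - snd (strip q) j) \<le> La * dk (Suc k) p q)"
    proof (intro exI[of _ "L1 + L2"] conjI ballI)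
      show "L1 + L2 \<ge> 0" using L1 L2 by simp
      fix p q assume pq: "p \<in> ?X" "q \<in> ?X"
      show "cmod (fst (strip p) j - fst (strip q) j) + cmod (snd (strip p) j - snd (strip q) j) \<le> (L1 + L2) * dk (Suc k) p q"
        using L1(2) L2(2) pq by (simp add: distrib_right add_mono)
    qed
  qed
  then have "\<exists>Lf. \<forall>j\<in>{..k}. Lf j \<ge> 0 \<and> (\<forall>p\<in>?X. \<forall>q\<in>?X. cmod (fst (strip p) j - fst (strip q) j) + cmod (snd (strip p) j - snd (strip q) j) \<le> Lf j * dk (Suc k) p q)"
    by (rule bchoice)
  then obtain Lf where Lf: "\<forall>j\<in>{..k}. Lf j \<ge> 0 \<and> (\<forall>p\<in>?X. \<forall>q\<in>?X. cmod (fst (strip p) j - fst (strip q) j) + cmod (snd (strip p) j - snd (strip q) j) \<le> Lf j * dk (Suc k) p q)"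
    by blast
  show ?case
  proof (intro exI[of _ "L' * (\<Sum>j\<le>k. Lf j)"] conjI ballI)
    show "L' * (\<Sum>j\<le>k. Lf j) \<ge> 0" using L'(1) Lf by (intro mult_nonneg_nonneg sum_nonneg) auto
    fix p q assume p: "p \<in> ?X" and q: "q \<in> ?X"
    have sp: "strip p \<in> Xs k C' \<delta>" unfolding C'_def by (rule strip_Xs[OF d Suc.prems p])
    have sq: "strip q \<in> Xs k C' \<delta>" unfolding C'_def by (rule strip_Xs[OF d Suc.prems q])
    have dd: "dk k (strip p) (strip q) \<le> (\<Sum>j\<le>k. Lf j) * dk (Suc k) p q"
      unfolding dk_def[of k] sum_distrib_right
      by (rule sum_mono) (use Lf p q in auto)
    have "cmod (invf p (Suc k) - invf q (Suc k)) = cmod (invf (strip p) k - invf (strip q) k)" by simp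
    also have "\<dots> \<le> L' * dk k (strip p) (strip q)" using L'(2) sp sq by blast
    also have "\<dots> \<le> L' * ((\<Sum>j\<le>k. Lf j) * dk (Suc k) p q)" using dd L'(1) by (rule mult_left_mono)
    finally show "cmod (invf p (Suc k) - invf q (Suc k)) \<le> L' * (\<Sum>j\<le>k. Lf j) * dk (Suc k) p q"
      by (simp add: mult.assoc)
  qed
qed

lemma fwd_bound:
  assumes B: "B \<ge> 0"
  shows "(\<forall>j<m. cmod (\<gamma> j) \<le> B) \<Longrightarrow> cmod (fst (fwd m \<gamma>) i) \<le> (1 + B)^m \<and> cmod (snd (fwd m \<gamma>) i) \<le> (1 + B)^m"
proof (induction m arbitrary: \<gamma> i)
  case 0 then show ?case by simp
next
  case (Suc m)
  define \<gamma>' where "\<gamma>' = (\<lambda>k. \<gamma> (Suc k))"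
  have h: "\<forall>j<m. cmod (\<gamma>' j) \<le> B" using Suc.prems by (simp add: \<gamma>'_def)
  have IH: "\<And>i. cmod (fst (fwd m \<gamma>') i) \<le> (1 + B)^m \<and> cmod (snd (fwd m \<gamma>') i) \<le> (1 + B)^m"
    using Suc.IH[OF h] by blast
  have P: "cmod (prv (snd (fwd m \<gamma>')) i) \<le> (1 + B)^m"
    using IH B by (cases i) auto
  have g: "cmod (\<gamma> 0) \<le> B" using Suc.prems by simp
  have e: "(1 + B)^Suc m = (1 + B)^m + B * (1 + B)^m" by (simp add: algebra_simps)
  show ?case unfolding e
    by (simp add: up_def \<gamma>'_def[symmetric]) (intro conjI bnd_minus[OF cmod_sg_le1 _ _ g] bnd_plus[OF cmod_sg_le1 _ _ g]; use IH P in blast)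
qed

lemma prod_le_factor:
  fixes f :: "nat \<Rightarrow> real"
  assumes "finite A" "j \<in> A" "\<And>k. k \<in> A \<Longrightarrow> 0 \<le> f k \<and> f k \<le> 1"
  shows "prod f A \<le> f j"
proof -
  have "prod f A = f j * prod f (A - {j})" using assms by (simp add: prod.remove)
  also have "\<dots> \<le> f j * 1"
    using assms by (intro mult_left_mono prod_le_1) auto
  finally show ?thesis by simp
qed

lemma S_delta_Xs:
  assumes n: "n \<ge> 1" and d: "\<delta> > 0" and p: "p \<in> S_delta n \<delta>"
  shows "p \<in> Xs k ((1 + 1/\<delta>)^n) \<delta>"
proof -
  have pS: "p \<in> S_set n" and re: "Re (fst p 0) > \<delta>" using p by (auto simp: S_delta_def)
  have im: "Im (fst p 0) = 0" using pS by (auto simp: S_set_def)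
  obtain m where m: "n = Suc m" using n by (cases n) auto
  have fp: "fwd n (invf p) = p" using S_fwd pS m by simp
  define f where "f k = 1 / sqrt (1 + (cmod (invf p k))^2)" for k
  have prodf: "Re (fst p 0) = (\<Prod>k<n. f k)" using fwd_a0[of n "invf p"] fp by (simp add: f_def)
  have f01: "0 \<le> f k \<and> f k \<le> 1" for k
  proof -
    have "sqrt (1 + (cmod (invf p k))^2) \<ge> 1" by simp
    then show ?thesis unfolding f_def using frac_le[of 1 1 1 "sqrt (1 + (cmod (invf p k))^2)"] by simp
  qed
  have gb: "cmod (invf p j) \<le> 1/\<delta>" if j: "j < n" for j
  proof -
    have "\<delta> < f j" using re prodf prod_le_factor[of "{..<n}" j f] f01 j by fastforce
    moreover have sp: "sqrt (1 + (cmod (invf p j))^2) > 0" by (simp add: add_pos_nonneg)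
    ultimately have "\<delta> * sqrt (1 + (cmod (invf p j))^2) < 1"
      unfolding f_def by (simp add: less_divide_eq)
    moreover have "cmod (invf p j) \<le> sqrt (1 + (cmod (invf p j))^2)"
      by (rule real_le_rsqrt) simp
    ultimately have "\<delta> * cmod (invf p j) < 1" using d by (smt (verit) mult_left_mono)
    then show ?thesis using d by (simp add: field_simps)
  qed
  have "cmod (fst (fwd n (invf p)) i) \<le> (1 + 1/\<delta>)^n \<and> cmod (snd (fwd n (invf p)) i) \<le> (1 + 1/\<delta>)^n" for i
    by (rule fwd_bound) (use d gb in auto)
  then show ?thesis unfolding Xs_def using fp im re by auto
qed

lemma coord_le_dist_pair:
  assumes "j < n"
  shows "cmod (fst p j - fst q j) \<le> dist_pair n p q" "cmod (snd p j - snd q j) \<le> dist_pair n p q"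
proof -
  let ?h = "\<lambda>k. (cmod (fst p k - fst q k))\<^sup>2 + (cmod (snd p k - snd q k))\<^sup>2"
  have le: "?h j \<le> (\<Sum>k<n. ?h k)" using assms by (intro member_le_sum) auto
  have "cmod (fst p j - fst q j) = sqrt ((cmod (fst p j - fst q j))\<^sup>2)" by simp
  also have "\<dots> \<le> sqrt (\<Sum>k<n. ?h k)" using le by (intro real_sqrt_le_mono) (smt (verit) zero_le_power2)
  finally show "cmod (fst p j - fst q j) \<le> dist_pair n p q" by (simp add: dist_pair_def)
  have "cmod (snd p j - snd q j) = sqrt ((cmod (snd p j - snd q j))\<^sup>2)" by simp
  also have "\<dots> \<le> sqrt (\<Sum>k<n. ?h k)" using le by (intro real_sqrt_le_mono) (smt (verit) zero_le_power2)
  finally show "cmod (snd p j - snd q j) \<le> dist_pair n p q" by (simp add: dist_pair_def)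
qed

lemma dk_le_dist:
  assumes "k < n"
  shows "dk k p q \<le> 2 * real (Suc k) * dist_pair n p q"
proof -
  have "dk k p q \<le> (\<Sum>j\<le>k. 2 * dist_pair n p q)"
    unfolding dk_def
    by (rule sum_mono) (use assms coord_le_dist_pair[of _ n p q] in \<open>smt (verit) atMost_iff le_less_trans\<close>)
  also have "\<dots> = 2 * real (Suc k) * dist_pair n p q" by simp
  finally show ?thesis .
qed

theorem corollary6p3:
  fixes n :: nat and \<delta> :: real
  assumes "n \<ge> 2" and "\<delta> > 0"
  shows "\<exists>L::real. \<forall>p\<in>S_delta n \<delta>. \<forall>q\<in>S_delta n \<delta>.
           dist_seq n (inv_nlft n p) (inv_nlft n q) \<le> L * dist_pair n p q"
proof -
  have n1: "n \<ge> 1" using assms(1) by simp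
  have d: "\<delta> > 0" by (rule assms(2))
  define C where "C = (1 + 1/\<delta>)^n"
  have C0: "C \<ge> 0" using d by (simp add: C_def)
  have "\<forall>k\<in>{..<n}. \<exists>L\<ge>0. \<forall>p\<in>Xs k C \<delta>. \<forall>q\<in>Xs k C \<delta>. cmod (invf p k - invf q k) \<le> L * dk k p q"
    using lip_invf[OF d C0] by blast
  then have "\<exists>Lk. \<forall>k\<in>{..<n}. Lk k \<ge> 0 \<and> (\<forall>p\<in>Xs k C \<delta>. \<forall>q\<in>Xs k C \<delta>. cmod (invf p k - invf q k) \<le> Lk k * dk k p q)"
    by (rule bchoice)
  then obtain Lk where Lk: "\<forall>k\<in>{..<n}. Lk k \<ge> 0 \<and> (\<forall>p\<in>Xs k C \<delta>. \<forall>q\<in>Xs k C \<delta>. cmod (invf p k - invf q k) \<le> Lk k * dk k p q)"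
    by blast
  show ?thesis
  proof (intro exI[of _ "\<Sum>k<n. Lk k * (2 * real (Suc k))"] ballI)
    fix p q assume p: "p \<in> S_delta n \<delta>" and q: "q \<in> S_delta n \<delta>"
    have pS: "p \<in> S_set n" "q \<in> S_set n" using p q by (auto simp: S_delta_def)
    have pX: "p \<in> Xs k C \<delta>" "q \<in> Xs k C \<delta>" for k
      unfolding C_def using S_delta_Xs[OF n1 d p] S_delta_Xs[OF n1 d q] by auto
    have "dist_seq n (inv_nlft n p) (inv_nlft n q) = L2_set (\<lambda>k. cmod (invf p k - invf q k)) {..<n}"
      unfolding inv_nlft_eq[OF n1 pS(1)] inv_nlft_eq[OF n1 pS(2)] dist_seq_def L2_set_def
      by (simp add: invn_def)
    also have "\<dots> \<le> (\<Sum>k<n. cmod (invf p k - invf q k))" by (rule L2_set_le_sum) simp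
    also have "\<dots> \<le> (\<Sum>k<n. Lk k * (2 * real (Suc k) * dist_pair n p q))"
    proof (rule sum_mono)
      fix k assume k: "k \<in> {..<n}"
      have "cmod (invf p k - invf q k) \<le> Lk k * dk k p q" using Lk k pX by blast
      also have "\<dots> \<le> Lk k * (2 * real (Suc k) * dist_pair n p q)"
        using Lk k dk_le_dist[of k n p q] by (intro mult_left_mono) auto
      finally show "cmod (invf p k - invf q k) \<le> Lk k * (2 * real (Suc k) * dist_pair n p q)" .
    qed
    also have "\<dots> = (\<Sum>k<n. Lk k * (2 * real (Suc k))) * dist_pair n p q"
      by (simp add: sum_distrib_right mult.assoc)
    finally show "dist_seq n (inv_nlft n p) (inv_nlft n q) \<le> (\<Sum>k<n. Lk k * (2 * real (Suc k))) * dist_pair n p q" .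
  qed
qed



end
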